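(* Let $k \ge 1$. The number of odd Grassmannian permutations (of any size $m\ge 0$) that avoid $\operatorname{id}_k = 12\cdots k$ is \[ \frac{C_{k+1}}{2} - 2C_{(k+1)/2} + 1 \quad\text{if $k$ is odd},\qquad \frac{C_{k+1} - C_{k/2}}{2} - C_{(k+2)/2} + 1 \quad\text{if $k$ is even}, \] where $C_n = \frac{1}{n+1}\binom{2n}{n}$.
   Context: A permutation is Grassmannian if it has at most one descent; it is odd if it has an odd number of inversions (pairs $i<j$ with $\pi_i>\pi_j$). A permutation avoids $12\cdots k$ if it has no increasing subsequence of length $k$. *)

theory Defs
  imports Complex_Main "HOL-Library.Sublist"
begin

definition is_perm :: "nat list \<Rightarrow> bool" where
  "is_perm p \<longleftrightarrow> distinct p \<and> set p = {1..length p}"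

definition descents :: "nat list \<Rightarrow> nat set" where
  "descents p = {i. Suc i < length p \<and> p ! i > p ! Suc i}"

definition grassmannian :: "nat list \<Rightarrow> bool" where
  "grassmannian p \<longleftrightarrow> card (descents p) \<le> 1"

definition inversions :: "nat list \<Rightarrow> (nat \<times> nat) set" where
  "inversions p = {(i, j). i < j \<and> j < length p \<and> p ! i > p ! j}"

definition odd_perm :: "nat list \<Rightarrow> bool" where
  "odd_perm p \<longleftrightarrow> odd (card (inversions p))"

definition avoids_id :: "nat \<Rightarrow> nat list \<Rightarrow> bool" where
  "avoids_id k p \<longleftrightarrow> \<not> (\<exists>xs. subseq xs p \<and> length xs = k \<and> sorted_wrt (<) xs)"

definition catalan :: "nat \<Rightarrow> rat" where
  "catalan n = of_nat ((2 * n) choose n) / of_nat (n + 1)"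

end

theory Submission
  imports Defs
begin


definition tt :: "nat \<Rightarrow> nat \<Rightarrow> int" where
  "tt l z = int ((l+z) choose z) - (if z = 0 then 0 else int ((l+z) choose (z-1)))"

lemma tt_0[simp]: "tt l 0 = 1" by (simp add: tt_def)

lemma tt_SS: "tt (Suc l) (Suc j) = tt l (Suc j) + tt (Suc l) j"
proof (cases j)
  case 0
  then show ?thesis by (simp add: tt_def)
next
  case (Suc j')
  have a: "(Suc l + Suc j) choose Suc j = ((l + Suc j) choose Suc j) + ((l + Suc j) choose j)"
    by (simp add: add.commute)
  have b: "(Suc l + Suc j) choose j = ((l + Suc j) choose j) + ((l + Suc j) choose j')"
    using Suc by (simp add: add.commute)
  show ?thesis using a b Suc by (simp add: tt_def)
qed

lemma tt_diag: "tt l (Suc l) = 0"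
proof -
  have "(l + Suc l) choose (Suc l) = (l + Suc l) choose l"
    using binomial_symmetric[of l "l + Suc l"] by simp
  then show ?thesis by (simp add: tt_def)
qed

definition gg :: "nat \<Rightarrow> nat \<Rightarrow> int" where
  "gg z l = tt l (Suc z) + tt (Suc l) z"

definition cR :: "nat \<Rightarrow> nat \<Rightarrow> int" where
  "cR Z n = (if even Z then (if even n then tt (n div 2) (Z div 2) + 2 * tt (n div 2) (Suc (Z div 2))
      else 2 * gg (Z div 2) (n div 2))
    else (if n div 2 = 0 then 0 else gg (Z div 2) (n div 2 - 1)))"

definition cQ :: "nat \<Rightarrow> nat \<Rightarrow> int" where
  "cQ Z n = (if even Z then (if even n then tt (n div 2) (Z div 2) else 0)
    else (if even n then tt (n div 2) (Suc (Z div 2))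
          else tt (Suc (n div 2)) (Z div 2) + tt (Suc (n div 2)) (Suc (Z div 2))))"

lemma par: obtains z where "Z = 2*z" | z where "Z = Suc (2*z)"
  by (metis oddE evenE Suc_eq_plus1)

lemma tt_1[simp]: "tt l (Suc 0) = int l"
  by (simp add: tt_def)


lemma d2[simp]: "(2*z) div 2 = (z::nat)" "Suc (2*z) div 2 = z" "Suc (Suc (2*z)) div 2 = Suc z"
  by auto

lemma cR_ee: "cR (2*z) (2*l) = tt l z + 2*tt l (Suc z)" by (simp add: cR_def)
lemma cR_eo: "cR (2*z) (Suc (2*l)) = 2*gg z l" by (simp add: cR_def)
lemma cR_oe: "cR (Suc (2*z)) (2*Suc l) = gg z l" "cR (Suc (2*z)) 0 = 0" by (simp_all add: cR_def)
lemma cR_oo: "cR (Suc (2*z)) (Suc (2*Suc l)) = gg z l" "cR (Suc (2*z)) (Suc 0) = 0" by (simp_all add: cR_def)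
lemma cQ_ee: "cQ (2*z) (2*l) = tt l z" by (simp add: cQ_def)
lemma cQ_eo: "cQ (2*z) (Suc (2*l)) = 0" by (simp add: cQ_def)
lemma cQ_oe: "cQ (Suc (2*z)) (2*l) = tt l (Suc z)" by (simp add: cQ_def)
lemma cQ_oo: "cQ (Suc (2*z)) (Suc (2*l)) = tt (Suc l) z + tt (Suc l) (Suc z)" by (simp add: cQ_def)

lemma tt_SS': "tt l (Suc j) = tt (Suc l) (Suc j) - tt (Suc l) j" using tt_SS by simp

lemma gg_diag: "gg (Suc l) l = 0"
proof -
  have "(l + Suc (Suc l)) choose (Suc (Suc l)) = (l + Suc (Suc l)) choose l"
    using binomial_symmetric[of l "l + Suc (Suc l)"] by simp
  then show ?thesis by (simp add: gg_def tt_def)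
qed

lemma gg_0[simp]: "gg 0 l = int l + 1" by (simp add: gg_def)

lemma rec_ee: assumes "z \<le> l"
  shows "cR (2*z) (2*l) = (if z=0 then 1 else 0) + (if z<l then cR (2*z) (2*l - 1) else 0) + (if 0<z then cQ (2*z-1) (2*l) else 0)
     \<and> cQ (2*z) (2*l) = (if z=0 then 1 else 0) - (if z<l then cQ (2*z) (2*l - 1) else 0) + (if 0<z then cR (2*z-1) (2*l) else 0)"
proof (cases z)
  case 0
  then show ?thesis
  proof (cases l)
    case 0 then show ?thesis using \<open>z=0\<close> by (simp add: cR_def cQ_def)
  next
    case (Suc l')
    then show ?thesis using \<open>z=0\<close> cR_ee[of 0 l] cR_eo[of 0 l'] cQ_ee[of 0 l] cQ_eo[of 0 l'] by simp
  qed
next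
  case (Suc z')
  then obtain l' where l: "l = Suc l'" using assms by (cases l) auto
  show ?thesis
  proof (cases "z < l")
    case True
    then show ?thesis using Suc l cR_ee[of z l] cR_eo[of z l'] cQ_oe[of z' l] cQ_ee[of z l] cQ_eo[of z l']
      cR_oe(1)[of z' l'] tt_SS[of l' z] tt_SS[of l' z'] by (simp add: gg_def)
  next
    case False
    then have "z = l" using assms by simp
    then show ?thesis using Suc l cR_ee[of z l] cQ_oe[of z' l] cQ_ee[of z l]
      cR_oe(1)[of z' l'] tt_SS[of l' z'] tt_diag[of l] tt_diag[of l'] by (simp add: gg_def)
  qed
qed

lemma rec_eo: assumes "z \<le> l"
  shows "cR (2*z) (Suc (2*l)) = (if z=0 then 1 else 0) + cR (2*z) (2*l) + (if 0<z then cQ (2*z-1) (Suc (2*l)) else 0)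
     \<and> cQ (2*z) (Suc (2*l)) = (if z=0 then 1 else 0) - cQ (2*z) (2*l) + (if 0<z then cR (2*z-1) (Suc (2*l)) else 0)"
proof (cases z)
  case 0
  then show ?thesis using cR_ee[of 0 l] cR_eo[of 0 l] cQ_ee[of 0 l] cQ_eo[of 0 l] by simp
next
  case (Suc z')
  then obtain l' where l: "l = Suc l'" using assms by (cases l) auto
  show ?thesis using Suc l cR_ee[of z l] cR_eo[of z l] cQ_oo[of z' l] cQ_ee[of z l] cQ_eo[of z l]
      cR_oo(1)[of z' l'] tt_SS[of l z'] tt_SS[of l' z'] by (simp add: gg_def)
qed

lemma rec_oe: assumes "z < l"
  shows "cR (Suc (2*z)) (2*l) = cR (Suc (2*z)) (2*l - 1) + cQ (2*z) (2*l)
     \<and> cQ (Suc (2*z)) (2*l) = - cQ (Suc (2*z)) (2*l - 1) + cR (2*z) (2*l)"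
proof -
  obtain l' where l: "l = Suc l'" using assms by (cases l) auto
  show ?thesis
  proof (cases l')
    case 0
    then have "z = 0" using assms l by simp
    then show ?thesis using l 0 cR_oe(1)[of 0 0] cR_oo(2)[of 0] cQ_ee[of 0 1] cQ_oe[of 0 1] cQ_oo[of 0 0]
       cR_ee[of 0 1] by (simp add: gg_def tt_def)
  next
    case (Suc l'')
    then show ?thesis using l cR_oe(1)[of z l'] cR_oo(1)[of z l''] cQ_ee[of z l] cQ_oe[of z l] cQ_oo[of z l']
       cR_ee[of z l] tt_SS[of l'' z] by (simp add: gg_def)
  qed
qed

lemma rec_oo: assumes "z \<le> l"
  shows "cR (Suc (2*z)) (Suc (2*l)) = (if z<l then cR (Suc (2*z)) (2*l) else 0) + cQ (2*z) (Suc (2*l))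
     \<and> cQ (Suc (2*z)) (Suc (2*l)) = - (if z<l then cQ (Suc (2*z)) (2*l) else 0) + cR (2*z) (Suc (2*l))"
proof (cases "z < l")
  case True
  then obtain l' where l: "l = Suc l'" by (cases l) auto
  show ?thesis using True l cR_oo(1)[of z l'] cR_oe(1)[of z l'] cQ_eo[of z l] cQ_oo[of z l] cQ_oe[of z l]
     cR_eo[of z l] tt_SS[of l z] by (simp add: gg_def)
next
  case False
  then have zl: "z = l" using assms by simp
  show ?thesis
  proof (cases l)
    case 0
    then show ?thesis using zl cR_oo(2)[of 0] cQ_eo[of 0 0] cQ_oo[of 0 0] cR_eo[of 0 0] by (simp add: gg_def tt_def)
  next
    case (Suc l')
    then show ?thesis using zl cR_oo(1)[of l l'] gg_diag[of l'] cQ_eo[of l l] cQ_oo[of l l] cR_eo[of l l]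
      tt_SS[of l l] tt_diag[of l] by (simp add: gg_def)
  qed
qed

lemma rec_gg: assumes "Z \<le> n"
  shows "gg Z n = (if Z=0 then 1 else 0) + (if 0<n \<and> Z<n then gg Z (n-1) else 0) + (if 0<Z then gg (Z-1) n else 0)"
proof (cases Z)
  case 0
  then show ?thesis by (cases n) auto
next
  case (Suc Z')
  then obtain n' where n: "n = Suc n'" using assms by (cases n) auto
  show ?thesis
  proof (cases "Z < n")
    case True
    then show ?thesis using Suc n tt_SS[of n' Z] tt_SS[of n Z'] by (simp add: gg_def)
  next
    case False
    then have "Z = n" using assms by simp
    then show ?thesis using Suc n tt_SS[of n n'] tt_diag[of n] by (simp add: gg_def)
  qed
qed

lemma sum_tt: "(\<Sum>z\<le>j. tt l z) = tt (Suc l) j"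
  by (induction j) (simp_all add: tt_SS)

lemma sum_tt_row: "(\<Sum>z\<le>l. tt l z) = tt (Suc l) (Suc l)"
  using sum_tt[of l l] tt_SS[of l l] tt_diag[of l] by simp

lemma sum_tt_row1: "(\<Sum>z\<le>l. tt l (Suc z)) = tt (Suc l) (Suc l) - 1"
proof -
  have "(\<Sum>z\<le>Suc l. tt l z) = tt l 0 + (\<Sum>z\<le>l. tt l (Suc z))"
    by (subst sum.atMost_Suc_shift) simp
  then show ?thesis using sum_tt[of l "Suc l"] tt_SS[of l l] tt_diag[of l] by simp
qed

lemma sum_gg: "(\<Sum>z\<le>l. gg z l) = tt (Suc (Suc l)) (Suc (Suc l)) - 1"
proof -
  have "(\<Sum>z\<le>l. gg z l) = (\<Sum>z\<le>l. tt l (Suc z)) + (\<Sum>z\<le>l. tt (Suc l) z)"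
    by (simp add: gg_def sum.distrib)
  then show ?thesis using sum_tt_row1[of l] sum_tt[of "Suc l" l] tt_SS[of "Suc l" "Suc l"]
     tt_diag[of "Suc l"] tt_SS[of "Suc l" l] by simp
qed

lemma sum_par_even: "(\<Sum>Z\<le>2*l. f Z) = (\<Sum>z\<le>l. f (2*z)) + (\<Sum>z<l. f (Suc (2*z)))"
proof (induction l)
  case 0 then show ?case by simp
next
  case (Suc l)
  have "(\<Sum>Z\<le>2*Suc l. f Z) = (\<Sum>Z\<le>2*l. f Z) + f (Suc (2*l)) + f (2* Suc l)"
    by (simp add: add.commute)
  then show ?case using Suc by (simp add: ac_simps)
qed

lemma sum_par_odd: "(\<Sum>Z\<le>Suc (2*l). f Z) = (\<Sum>z\<le>l. f (2*z)) + (\<Sum>z\<le>l. f (Suc (2*z)))"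
proof -
  have "(\<Sum>z\<le>l. f (Suc (2*z))) = (\<Sum>z<l. f (Suc (2*z))) + f (Suc (2*l))"
    by (simp add: lessThan_Suc_atMost[symmetric])
  then show ?thesis using sum_par_even[of f l] by (simp add: ac_simps)
qed

lemma totS_even: "(\<Sum>Z\<le>2*l. cR Z (2*l)) = 4 * tt (Suc l) (Suc l) - 3"
proof (cases l)
  case 0
  then show ?thesis by (simp add: cR_def tt_def)
next
  case (Suc l')
  have "(\<Sum>Z\<le>2*l. cR Z (2*l)) = (\<Sum>z\<le>l. cR (2*z) (2*l)) + (\<Sum>z<l. cR (Suc (2*z)) (2*l))"
    by (rule sum_par_even)
  also have "\<dots> = (\<Sum>z\<le>l. tt l z + 2 * tt l (Suc z)) + (\<Sum>z<l. gg z l')"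
    by (simp only: cR_ee Suc cR_oe(1))
  also have "(\<Sum>z<l. gg z l') = (\<Sum>z\<le>l'. gg z l')" using Suc lessThan_Suc_atMost by simp
  finally show ?thesis using sum_gg[of l'] sum_tt_row[of l] sum_tt_row1[of l] Suc
    by (simp add: sum.distrib sum_distrib_left[symmetric])
qed

lemma totS_odd: "(\<Sum>Z\<le>Suc (2*l). cR Z (Suc (2*l))) = tt (Suc l) (Suc l) + 2 * tt (Suc (Suc l)) (Suc (Suc l)) - 3"
proof (cases l)
  case 0
  then show ?thesis by (simp add: cR_def tt_def gg_def)
next
  case (Suc l')
  have "(\<Sum>Z\<le>Suc (2*l). cR Z (Suc (2*l))) = (\<Sum>z\<le>l. cR (2*z) (Suc (2*l))) + (\<Sum>z\<le>l. cR (Suc (2*z)) (Suc (2*l)))"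
    by (rule sum_par_odd)
  also have "\<dots> = (\<Sum>z\<le>l. 2 * gg z l) + (\<Sum>z\<le>l. gg z l')"
    by (simp only: cR_eo Suc cR_oo(1))
  also have "(\<Sum>z\<le>l. gg z l') = (\<Sum>z\<le>l'. gg z l')" using Suc gg_diag[of l'] by simp
  finally show ?thesis using sum_gg[of l'] sum_gg[of l] Suc
    by (simp add: sum_distrib_left[symmetric])
qed

lemma catalan_tt: "catalan m = of_int (tt m m)"
proof (cases m)
  case 0 then show ?thesis by (simp add: catalan_def tt_def)
next
  case (Suc m')
  define c0 where "c0 = (2*m) choose m"
  define c1 where "c1 = (2*m) choose m'"
  have "(2*m - m') * ((2*m) choose m') = Suc m' * ((2*m) choose Suc m')"
    using binomial_absorb_comp[of "2*m" m'] binomial_absorption[of m' "2*m"] by simp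
  then have e: "(m + 1) * c1 = m * c0" using Suc unfolding c0_def c1_def
    by (simp add: algebra_simps)
  have e': "(of_nat (m+1) :: rat) * of_nat c1 = of_nat m * of_nat c0"
    using e by (metis of_nat_mult)
  have t: "tt m m = int c0 - int c1" unfolding tt_def c0_def c1_def using Suc by (simp add: mult_2)
  have "catalan m = of_nat c0 / of_nat (m+1)" unfolding catalan_def c0_def by simp
  also have "\<dots> = of_nat c0 - of_nat c1"
    using e' by (simp add: field_simps)
  finally show ?thesis using t by simp
qed



definition nO :: "bool list \<Rightarrow> nat" where "nO w = length (filter id w)"
definition nZ :: "bool list \<Rightarrow> nat" where "nZ w = length (filter Not w)"

lemma nO_simps[simp]: "nO [] = 0" "nO (True#w) = Suc (nO w)" "nO (False#w) = nO w"
  by (simp_all add: nO_def)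
lemma nZ_simps[simp]: "nZ [] = 0" "nZ (True#w) = nZ w" "nZ (False#w) = Suc (nZ w)"
  by (simp_all add: nZ_def)

fun lisw :: "bool list \<Rightarrow> nat" where
  "lisw [] = 0"
| "lisw (True#w) = Suc (lisw w)"
| "lisw (False#w) = max (Suc (nZ w)) (lisw w)"

fun invw :: "bool list \<Rightarrow> nat" where
  "invw [] = 0"
| "invw (True#w) = invw w"
| "invw (False#w) = nO w + invw w"

lemma nZ_le: "nZ w \<le> lisw w"
  by (induction w rule: lisw.induct) auto

lemma nO_le: "nO w \<le> lisw w"
  by (induction w rule: lisw.induct) auto

lemma len_nOZ: "length w = nO w + nZ w"
  by (induction w) (auto simp: nO_def nZ_def)

definition W :: "nat \<Rightarrow> nat \<Rightarrow> bool list set" where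
  "W Z n = {w. nZ w = Z \<and> lisw w \<le> n}"

lemma finite_W: "finite (W Z n)"
proof -
  have "length w \<le> Z + n" if "w \<in> W Z n" for w
    using len_nOZ[of w] nO_le[of w] that by (simp add: W_def)
  then have "W Z n \<subseteq> {w. set w \<subseteq> UNIV \<and> length w \<le> Z + n}" by auto
  then show ?thesis using finite_lists_length_le[of "UNIV :: bool set"] finite_subset by auto
qed

lemma W_empty: assumes "n < Z" shows "W Z n = {}"
proof -
  have "Z \<le> n" if "w \<in> W Z n" for w
    using that nZ_le[of w] unfolding W_def by auto
  then show ?thesis using assms by force
qed

lemma W_dec: "W Z n = (if Z = 0 then {[]} else {})
   \<union> (if 0 < n then Cons True ` W Z (n-1) else {})
   \<union> (if 0 < Z \<and> Z \<le> n then Cons False ` W (Z-1) n else {})"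
proof (rule set_eqI)
  fix w
  show "w \<in> W Z n \<longleftrightarrow> w \<in> (if Z = 0 then {[]} else {})
   \<union> (if 0 < n then Cons True ` W Z (n-1) else {})
   \<union> (if 0 < Z \<and> Z \<le> n then Cons False ` W (Z-1) n else {})"
  proof (cases w)
    case Nil then show ?thesis by (auto simp: W_def)
  next
    case (Cons b v)
    then show ?thesis by (cases b) (auto simp: W_def)
  qed
qed

lemma sum_W: "(\<Sum>w\<in>W Z n. f w) = (if Z = 0 then f [] else 0)
   + (if 0 < n then (\<Sum>w\<in>W Z (n-1). f (True#w)) else 0)
   + (if 0 < Z \<and> Z \<le> n then (\<Sum>w\<in>W (Z-1) n. f (False#w)) else 0)"
proof -
  let ?A = "(if Z = 0 then {[]} else {}) :: bool list set"
  let ?B = "if 0 < n then Cons True ` W Z (n-1) else {}"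
  let ?C = "if 0 < Z \<and> Z \<le> n then Cons False ` W (Z-1) n else {}"
  have fin: "finite ?A" "finite ?B" "finite ?C" using finite_W by auto
  have d1: "?A \<inter> ?B = {}" and d2: "(?A \<union> ?B) \<inter> ?C = {}" by auto
  have "(\<Sum>w\<in>W Z n. f w) = sum f (?A \<union> ?B \<union> ?C)" using W_dec by metis
  also have "\<dots> = sum f (?A \<union> ?B) + sum f ?C"
    by (rule sum.union_disjoint) (use fin d2 in auto)
  also have "sum f (?A \<union> ?B) = sum f ?A + sum f ?B"
    by (rule sum.union_disjoint) (use fin d1 in auto)
  also have "sum f ?B = (if 0 < n then (\<Sum>w\<in>W Z (n-1). f (True#w)) else 0)"
    by (simp add: sum.reindex)
  also have "sum f ?C = (if 0 < Z \<and> Z \<le> n then (\<Sum>w\<in>W (Z-1) n. f (False#w)) else 0)"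
    by (simp add: sum.reindex)
  finally show ?thesis by simp
qed

definition Rw :: "nat \<Rightarrow> nat \<Rightarrow> int" where "Rw Z n = (\<Sum>w\<in>W Z n. (-1)^invw w)"
definition Qw :: "nat \<Rightarrow> nat \<Rightarrow> int" where "Qw Z n = (\<Sum>w\<in>W Z n. (-1)^(invw w + nO w))"
definition Pw :: "nat \<Rightarrow> nat \<Rightarrow> int" where "Pw Z n = (\<Sum>w\<in>W Z n. 1)"

lemma Rw_rec: "Rw Z n = (if Z = 0 then 1 else 0) + (if 0 < n then Rw Z (n-1) else 0)
   + (if 0 < Z \<and> Z \<le> n then Qw (Z-1) n else 0)"
  unfolding Rw_def Qw_def by (subst sum_W) (simp add: add.commute)

lemma m1_twice: "(-1::int)^(a+b+a) = (-1)^b"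
proof -
  have "a + b + a = b + 2*a" by simp
  then show ?thesis by (simp add: power_add power_mult)
qed

lemma Qw_rec: "Qw Z n = (if Z = 0 then 1 else 0) - (if 0 < n then Qw Z (n-1) else 0)
   + (if 0 < Z \<and> Z \<le> n then Rw (Z-1) n else 0)"
  unfolding Rw_def Qw_def by (subst sum_W) (simp add: sum_negf m1_twice)

lemma Pw_rec: "Pw Z n = (if Z = 0 then 1 else 0) + (if 0 < n then Pw Z (n-1) else 0)
   + (if 0 < Z \<and> Z \<le> n then Pw (Z-1) n else 0)"
  unfolding Pw_def by (subst sum_W) simp

lemma RQP_zero: "n < Z \<Longrightarrow> Rw Z n = 0 \<and> Qw Z n = 0 \<and> Pw Z n = 0"
  by (simp add: Rw_def Qw_def Pw_def W_empty)



lemma crec: assumes "Z \<le> n"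
  shows "cR Z n = (if Z=0 then 1 else 0) + (if 0<n \<and> Z<n then cR Z (n-1) else 0) + (if 0<Z then cQ (Z-1) n else 0)
     \<and> cQ Z n = (if Z=0 then 1 else 0) - (if 0<n \<and> Z<n then cQ Z (n-1) else 0) + (if 0<Z then cR (Z-1) n else 0)"
proof -
  obtain z where Zz: "Z = 2*z \<or> Z = Suc (2*z)" by (metis par)
  obtain l where nl: "n = 2*l \<or> n = Suc (2*l)" by (metis par)
  from Zz nl show ?thesis
  proof (elim disjE)
    assume a: "Z = 2*z" "n = 2*l"
    then have "z \<le> l" using assms by simp
    from rec_ee[OF this] show ?thesis using a by simp
  next
    assume a: "Z = 2*z" "n = Suc (2*l)"
    then have "z \<le> l" using assms by simp
    from rec_eo[OF this] show ?thesis using a \<open>z \<le> l\<close> by simp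
  next
    assume a: "Z = Suc (2*z)" "n = 2*l"
    then have "z < l" using assms by simp
    from rec_oe[OF this] show ?thesis using a \<open>z < l\<close> by simp
  next
    assume a: "Z = Suc (2*z)" "n = Suc (2*l)"
    then have "z \<le> l" using assms by simp
    from rec_oo[OF this] show ?thesis using a \<open>z \<le> l\<close> by simp
  qed
qed

lemma main_eq: "Z \<le> n \<Longrightarrow> Rw Z n = cR Z n \<and> Qw Z n = cQ Z n \<and> Pw Z n = gg Z n"
proof (induction "Z + n" arbitrary: Z n rule: less_induct)
  case less
  have ih1: "Rw Z (n-1) = (if Z < n then cR Z (n-1) else 0) \<and> Qw Z (n-1) = (if Z < n then cQ Z (n-1) else 0)
       \<and> Pw Z (n-1) = (if Z < n then gg Z (n-1) else 0)" if "0 < n"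
  proof (cases "Z < n")
    case True then show ?thesis using less that by auto
  next
    case False then show ?thesis using RQP_zero[of "n-1" Z] that by auto
  qed
  have ih2: "Rw (Z-1) n = cR (Z-1) n \<and> Qw (Z-1) n = cQ (Z-1) n \<and> Pw (Z-1) n = gg (Z-1) n" if "0 < Z"
    using less that by auto
  have e1: "(if 0 < n then Rw Z (n-1) else 0) = (if 0<n \<and> Z<n then cR Z (n-1) else 0)"
    "(if 0 < n then Qw Z (n-1) else 0) = (if 0<n \<and> Z<n then cQ Z (n-1) else 0)"
    "(if 0 < n then Pw Z (n-1) else 0) = (if 0<n \<and> Z<n then gg Z (n-1) else 0)"
    using ih1 by auto
  have e2: "(if 0 < Z \<and> Z \<le> n then Qw (Z-1) n else 0) = (if 0<Z then cQ (Z-1) n else 0)"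
    "(if 0 < Z \<and> Z \<le> n then Rw (Z-1) n else 0) = (if 0<Z then cR (Z-1) n else 0)"
    "(if 0 < Z \<and> Z \<le> n then Pw (Z-1) n else 0) = (if 0<Z then gg (Z-1) n else 0)"
    using ih2 less.prems by auto
  have "Rw Z n = cR Z n" using Rw_rec[of Z n] crec[OF less.prems] e1(1) e2(1) by simp
  moreover have "Qw Z n = cQ Z n" using Qw_rec[of Z n] crec[OF less.prems] e1(2) e2(2) by simp
  moreover have "Pw Z n = gg Z n" using Pw_rec[of Z n] rec_gg[OF less.prems] e1(3) e2(3) by simp
  ultimately show ?case by simp
qed

definition OW :: "nat \<Rightarrow> bool list set" where "OW n = {w. lisw w \<le> n \<and> odd (invw w)}"

lemma OW_UN: "OW n = (\<Union>Z\<le>n. {w \<in> W Z n. odd (invw w)})"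
  unfolding OW_def W_def using nZ_le by (auto intro: le_trans)

lemma card_odd_W: "2 * int (card {w \<in> W Z n. odd (invw w)}) = Pw Z n - Rw Z n"
proof -
  let ?O = "{w \<in> W Z n. odd (invw w)}" and ?E = "{w \<in> W Z n. even (invw w)}"
  have fO: "finite ?O" and fE: "finite ?E" using finite_W by auto
  have u: "W Z n = ?O \<union> ?E" by auto
  have d: "?O \<inter> ?E = {}" by auto
  have "Pw Z n = int (card ?O) + int (card ?E)"
    unfolding Pw_def by (subst u, subst sum.union_disjoint) (use fO fE d in auto)
  moreover have "Rw Z n = - int (card ?O) + int (card ?E)"
  proof -
    have "Rw Z n = (\<Sum>w\<in>?O. (-1)^invw w) + (\<Sum>w\<in>?E. (-1)^invw w)"
      unfolding Rw_def by (subst u, subst sum.union_disjoint) (use fO fE d in auto)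
    also have "(\<Sum>w\<in>?O. (-1::int)^invw w) = (\<Sum>w\<in>?O. -1)" by (rule sum.cong) auto
    also have "(\<Sum>w\<in>?E. (-1::int)^invw w) = (\<Sum>w\<in>?E. 1)" by (rule sum.cong) auto
    finally show ?thesis by simp
  qed
  ultimately show ?thesis by simp
qed

lemma card_OW: "finite (OW n) \<and> 2 * int (card (OW n)) = (\<Sum>Z\<le>n. gg Z n) - (\<Sum>Z\<le>n. cR Z n)"
proof -
  have fW: "finite {w \<in> W Z n. odd (invw w)}" for Z by (rule finite_subset[OF _ finite_W]) auto
  have fin: "finite (OW n)" unfolding OW_UN using fW by auto
  have "card (OW n) = (\<Sum>Z\<le>n. card {w \<in> W Z n. odd (invw w)})"
    unfolding OW_UN by (rule card_UN_disjoint) (use fW in \<open>auto simp: W_def\<close>)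
  then have "2 * int (card (OW n)) = (\<Sum>Z\<le>n. 2 * int (card {w \<in> W Z n. odd (invw w)}))"
    by (simp add: sum_distrib_left)
  also have "\<dots> = (\<Sum>Z\<le>n. Pw Z n - Rw Z n)" using card_odd_W by simp
  also have "\<dots> = (\<Sum>Z\<le>n. gg Z n - cR Z n)" using main_eq by (intro sum.cong) auto
  finally show ?thesis using fin by (simp add: sum_subtractf)
qed




definition invS :: "nat set \<Rightarrow> nat set \<Rightarrow> (nat \<times> nat) set" where
  "invS A B = {(a,b). a \<in> A \<and> b \<in> B \<and> b < a}"

lemma sorted_nth_le: "sorted_wrt (<) xs \<Longrightarrow> i \<le> j \<Longrightarrow> j < length xs \<Longrightarrow> xs!i \<le> (xs!j :: nat)"
proof (cases "i = j")
  case False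
  assume "sorted_wrt (<) xs" "i \<le> j" "j < length xs"
  then show ?thesis using False sorted_wrt_nth_less[of "(<)" xs i j] by simp
qed simp

lemma descents_app:
  assumes "sorted_wrt (<) xs" "sorted_wrt (<) ys"
  shows "descents (xs @ ys) \<subseteq> {length xs - 1}"
proof
  fix i assume "i \<in> descents (xs @ ys)"
  then have i: "Suc i < length (xs@ys)" "(xs@ys)!i > (xs@ys)!Suc i" by (auto simp: descents_def)
  show "i \<in> {length xs - 1}"
  proof (rule ccontr)
    assume "i \<notin> {length xs - 1}"
    then have "Suc i < length xs \<or> length xs \<le> i" by auto
    then show False
    proof
      assume a: "Suc i < length xs"
      then have "xs!i < xs!Suc i" using assms(1) sorted_wrt_nth_less by blast
      then show False using i a by (simp add: nth_append)
    next
      assume a: "length xs \<le> i"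
      then have "ys!(i - length xs) < ys!(Suc i - length xs)"
        using sorted_wrt_nth_less[OF assms(2), of "i - length xs" "Suc i - length xs"] i by auto
      then show False using i a by (simp add: nth_append Suc_diff_le)
    qed
  qed
qed

lemma grass_app:
  assumes "sorted_wrt (<) xs" "sorted_wrt (<) ys"
  shows "grassmannian (xs @ ys)"
proof -
  have "card (descents (xs @ ys)) \<le> card {length xs - 1}"
    using descents_app[OF assms] by (intro card_mono) auto
  then show ?thesis by (simp add: grassmannian_def)
qed

lemma inversions_app:
  assumes s: "sorted_wrt (<) xs" "sorted_wrt (<) ys" and d: "set xs \<inter> set ys = {}"
  shows "card (inversions (xs @ ys)) = card (invS (set xs) (set ys))"
proof -
  let ?p = "xs @ ys"
  have dp: "distinct ?p" using s d by (auto simp: strict_sorted_iff)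
  have loc: "i < length xs \<and> length xs \<le> j" if "(i,j) \<in> inversions ?p" for i j
  proof -
    from that have ij: "i < j" "j < length ?p" "?p!i > ?p!j" by (auto simp: inversions_def)
    show ?thesis
    proof (rule ccontr)
      assume "\<not> (i < length xs \<and> length xs \<le> j)"
      then have "j < length xs \<or> length xs \<le> i" using ij by auto
      then show False
      proof
        assume a: "j < length xs"
        then have "xs!i < xs!j" using s(1) ij sorted_wrt_nth_less by blast
        then show False using ij a by (simp add: nth_append)
      next
        assume a: "length xs \<le> i"
        then have "ys!(i - length xs) < ys!(j - length xs)"
          using sorted_wrt_nth_less[OF s(2), of "i - length xs" "j - length xs"] ij by auto
        then show False using ij a by (simp add: nth_append)
      qed
    qed
  qed
  have "bij_betw (\<lambda>(i,j). (?p!i, ?p!j)) (inversions ?p) (invS (set xs) (set ys))"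
  proof (rule bij_betwI')
    fix x y assume "x \<in> inversions ?p" "y \<in> inversions ?p"
    then show "((\<lambda>(i,j). (?p!i, ?p!j)) x = (\<lambda>(i,j). (?p!i, ?p!j)) y) = (x = y)"
      using dp by (auto simp: inversions_def nth_eq_iff_index_eq)
  next
    fix x assume x: "x \<in> inversions ?p"
    obtain i j where [simp]: "x = (i,j)" by (cases x)
    have "i < length xs \<and> length xs \<le> j" using loc x by simp
    then show "(\<lambda>(i,j). (?p!i, ?p!j)) x \<in> invS (set xs) (set ys)"
      using x by (auto simp: inversions_def invS_def nth_append)
  next
    fix y assume "y \<in> invS (set xs) (set ys)"
    then obtain a b where y: "y = (a,b)" "a \<in> set xs" "b \<in> set ys" "b < a" by (auto simp: invS_def)
    obtain i where i: "i < length xs" "xs!i = a" using y by (auto simp: in_set_conv_nth)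
    obtain j where j: "j < length ys" "ys!j = b" using y by (auto simp: in_set_conv_nth)
    have "(i, length xs + j) \<in> inversions ?p" using i j y by (auto simp: inversions_def nth_append)
    moreover have "y = (\<lambda>(i,j). (?p!i, ?p!j)) (i, length xs + j)" using i j y by (simp add: nth_append)
    ultimately show "\<exists>x\<in>inversions ?p. y = (\<lambda>(i,j). (?p!i, ?p!j)) x" by blast
  qed
  then show ?thesis by (rule bij_betw_same_card)
qed

lemma subseq_set: "subseq xs ys \<Longrightarrow> set xs \<subseteq> set ys"
  by (induct rule: list_emb.induct) auto

lemma lis_app:
  fixes A B :: "nat set"
  assumes fA: "finite A" and fB: "finite B"
  shows "(\<exists>zs. subseq zs (sorted_list_of_set A @ sorted_list_of_set B) \<and> length zs = k \<and> sorted_wrt (<) zs)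
     \<longleftrightarrow> (\<exists>t. k \<le> card {a\<in>A. a<t} + card {b\<in>B. t \<le> b})"
proof
  assume "\<exists>zs. subseq zs (sorted_list_of_set A @ sorted_list_of_set B) \<and> length zs = k \<and> sorted_wrt (<) zs"
  then obtain zs where z: "subseq zs (sorted_list_of_set A @ sorted_list_of_set B)" "length zs = k" "sorted_wrt (<) zs"
    by blast
  from z(1) obtain z1 z2 where zz: "zs = z1 @ z2" "subseq z1 (sorted_list_of_set A)" "subseq z2 (sorted_list_of_set B)"
    by (rule subseq_appendE)
  have s1: "set z1 \<subseteq> A" using subseq_set[OF zz(2)] fA by simp
  have s2: "set z2 \<subseteq> B" using subseq_set[OF zz(3)] fB by simp
  have sz: "sorted_wrt (<) z1" "sorted_wrt (<) z2" "\<forall>x\<in>set z1. \<forall>y\<in>set z2. x < y"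
    using z(3) zz(1) by (auto simp: sorted_wrt_append)
  define t where "t = (if z1 = [] then 0 else Suc (last z1))"
  have "\<forall>x\<in>set z1. x < t"
  proof
    fix x assume x: "x \<in> set z1"
    then have ne: "z1 \<noteq> []" by auto
    have "x \<le> last z1"
    proof -
      obtain i where i: "i < length z1" "z1!i = x" using x by (auto simp: in_set_conv_nth)
      have "last z1 = z1 ! (length z1 - 1)" using ne by (simp add: last_conv_nth)
      then show ?thesis using i sorted_nth_le[OF sz(1), of i "length z1 - 1"] by simp
    qed
    then show "x < t" using ne by (simp add: t_def)
  qed
  moreover have "\<forall>y\<in>set z2. t \<le> y"
    using sz(3) by (auto simp: t_def Suc_le_eq)
  ultimately have c1: "set z1 \<subseteq> {a\<in>A. a<t}" and c2: "set z2 \<subseteq> {b\<in>B. t\<le>b}" using s1 s2 by auto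
  have dz: "distinct z1" "distinct z2" using sz(1,2) by (auto simp: strict_sorted_iff)
  have "length z1 = card (set z1)" using dz(1) by (simp add: distinct_card)
  also have "\<dots> \<le> card {a\<in>A. a<t}" by (rule card_mono) (use fA c1 in auto)
  finally have l1: "length z1 \<le> card {a\<in>A. a<t}" .
  have "length z2 = card (set z2)" using dz(2) by (simp add: distinct_card)
  also have "\<dots> \<le> card {b\<in>B. t\<le>b}" by (rule card_mono) (use fB c2 in auto)
  finally have l2: "length z2 \<le> card {b\<in>B. t\<le>b}" .
  from l1 l2 have "length zs \<le> card {a\<in>A. a<t} + card {b\<in>B. t \<le> b}" using zz(1) by simp
  then show "\<exists>t. k \<le> card {a\<in>A. a<t} + card {b\<in>B. t \<le> b}" using z(2) by blast
next
  assume "\<exists>t. k \<le> card {a\<in>A. a<t} + card {b\<in>B. t \<le> b}"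
  then obtain t where t: "k \<le> card {a\<in>A. a<t} + card {b\<in>B. t \<le> b}" by blast
  define z0 where "z0 = sorted_list_of_set {a\<in>A. a<t} @ sorted_list_of_set {b\<in>B. t \<le> b}"
  have f1: "finite {a\<in>A. a<t}" and f2: "finite {b\<in>B. t \<le> b}" using fA fB by auto
  have "subseq (sorted_list_of_set {a\<in>A. a<t}) (sorted_list_of_set A)"
  proof (rule sorted_subset_imp_subseq)
    show "set (sorted_list_of_set {a\<in>A. a<t}) \<subseteq> set (sorted_list_of_set A)" using f1 fA by auto
    show "sorted_wrt (<) (sorted_list_of_set {a\<in>A. a<t})" by simp
    show "sorted_wrt (\<le>) (sorted_list_of_set A)" by (metis sorted_sorted_list_of_set)
  qed
  moreover have "subseq (sorted_list_of_set {b\<in>B. t \<le> b}) (sorted_list_of_set B)"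
  proof (rule sorted_subset_imp_subseq)
    show "set (sorted_list_of_set {b\<in>B. t \<le> b}) \<subseteq> set (sorted_list_of_set B)" using f2 fB by auto
    show "sorted_wrt (<) (sorted_list_of_set {b\<in>B. t \<le> b})" by simp
    show "sorted_wrt (\<le>) (sorted_list_of_set B)" by (metis sorted_sorted_list_of_set)
  qed
  ultimately have sub: "subseq z0 (sorted_list_of_set A @ sorted_list_of_set B)"
    unfolding z0_def by (rule list_emb_append_mono)
  have srt: "sorted_wrt (<) z0" unfolding z0_def using f1 f2
    by (auto simp: sorted_wrt_append intro: less_le_trans)
  have len: "length z0 = card {a\<in>A. a<t} + card {b\<in>B. t \<le> b}" unfolding z0_def using f1 f2 by simp
  have "subseq (take k z0) z0" by (rule prefix_imp_subseq) (rule take_is_prefix)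
  then have "subseq (take k z0) (sorted_list_of_set A @ sorted_list_of_set B)"
    using sub by (rule subseq_order.order_trans)
  moreover have "length (take k z0) = k" using len t by simp
  moreover have "sorted_wrt (<) (take k z0)" using srt by (rule sorted_wrt_take)
  ultimately show "\<exists>zs. subseq zs (sorted_list_of_set A @ sorted_list_of_set B) \<and> length zs = k \<and> sorted_wrt (<) zs"
    by blast
qed



definition Aset :: "nat \<Rightarrow> bool list \<Rightarrow> nat set" where
  "Aset i w = {j. i \<le> j \<and> j < i + length w \<and> w!(j-i)}"
definition Bset :: "nat \<Rightarrow> bool list \<Rightarrow> nat set" where
  "Bset i w = {j. i \<le> j \<and> j < i + length w \<and> \<not> w!(j-i)}"

lemma Aset_Nil[simp]: "Aset i [] = {}" and Bset_Nil[simp]: "Bset i [] = {}"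
  by (auto simp: Aset_def Bset_def)

lemma nth_Cons_diff: assumes "i \<le> j" shows "(b#w)!(j-i) = (if j = i then b else w!(j - Suc i))"
proof (cases "j = i")
  case False
  then have "j - i = Suc (j - Suc i)" using assms by simp
  then show ?thesis using False by simp
qed simp

lemma Aset_Cons: "Aset i (b#w) = (if b then insert i (Aset (Suc i) w) else Aset (Suc i) w)"
  by (auto simp: Aset_def nth_Cons_diff split: if_splits)
lemma Bset_Cons: "Bset i (b#w) = (if b then Bset (Suc i) w else insert i (Bset (Suc i) w))"
  by (auto simp: Bset_def nth_Cons_diff split: if_splits)

lemma AB_fin[simp]: "finite (Aset i w)" "finite (Bset i w)"
  by (auto simp: Aset_def Bset_def)

lemma AB_ge: "x \<in> Aset i w \<Longrightarrow> i \<le> x" "x \<in> Bset i w \<Longrightarrow> i \<le> x"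
  by (auto simp: Aset_def Bset_def)

lemma AB_disj: "Aset i w \<inter> Bset i w = {}" by (auto simp: Aset_def Bset_def)
lemma AB_un: "Aset i w \<union> Bset i w = {i..<i + length w}" by (auto simp: Aset_def Bset_def)

lemma card_Aset: "card (Aset i w) = nO w"
proof (induction w arbitrary: i)
  case Nil then show ?case by simp
next
  case (Cons b w)
  have "i \<notin> Aset (Suc i) w" using AB_ge by fastforce
  then show ?case using Cons by (cases b) (auto simp: Aset_Cons)
qed

lemma card_Bset: "card (Bset i w) = nZ w"
proof (induction w arbitrary: i)
  case Nil then show ?case by simp
next
  case (Cons b w)
  have "i \<notin> Bset (Suc i) w" using AB_ge by fastforce
  then show ?case using Cons by (cases b) (auto simp: Bset_Cons)
qed

lemma card_invS: "card (invS (Aset i w) (Bset i w)) = invw w"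
proof (induction w arbitrary: i)
  case Nil then show ?case by (simp add: invS_def)
next
  case (Cons b w)
  show ?case
  proof (cases b)
    case True
    have "invS (Aset i (b#w)) (Bset i (b#w)) = invS (Aset (Suc i) w) (Bset (Suc i) w)"
      using True by (auto simp: invS_def Aset_Cons Bset_Cons dest: AB_ge)
    then show ?thesis using Cons True by simp
  next
    case False
    have e: "invS (Aset i (b#w)) (Bset i (b#w)) = invS (Aset (Suc i) w) (Bset (Suc i) w) \<union> (\<lambda>a. (a,i)) ` Aset (Suc i) w"
      using False by (auto simp: invS_def Aset_Cons Bset_Cons dest: AB_ge)
    have fin: "finite (invS (Aset (Suc i) w) (Bset (Suc i) w))"
      by (rule finite_subset[of _ "Aset (Suc i) w \<times> Bset (Suc i) w"]) (auto simp: invS_def)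
    have dj: "invS (Aset (Suc i) w) (Bset (Suc i) w) \<inter> (\<lambda>a. (a,i)) ` Aset (Suc i) w = {}"
      by (auto simp: invS_def dest: AB_ge)
    have "card ((\<lambda>a. (a,i)) ` Aset (Suc i) w) = card (Aset (Suc i) w)"
      by (rule card_image) (auto simp: inj_on_def)
    then show ?thesis using Cons False e fin dj card_Un_disjoint card_Aset
      by (simp add: card_Un_disjoint)
  qed
qed

definition gperm :: "bool list \<Rightarrow> nat list" where
  "gperm w = sorted_list_of_set (Aset 1 w) @ sorted_list_of_set (Bset 1 w)"

lemma length_gperm: "length (gperm w) = length w"
  by (simp add: gperm_def card_Aset card_Bset len_nOZ)

lemma gperm_perm: "is_perm (gperm w)"
proof -
  have "distinct (gperm w)" using AB_disj[of 1 w] by (simp add: gperm_def)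
  moreover have "set (gperm w) = {1..<1 + length w}"
    using AB_un[of 1 w] by (simp add: gperm_def)
  moreover have "{1..<1 + length w} = {1..length (gperm w)}" using length_gperm[of w] by auto
  ultimately show ?thesis by (simp add: is_perm_def)
qed

lemma gperm_grass: "grassmannian (gperm w)"
  unfolding gperm_def by (rule grass_app) auto

lemma gperm_inv: "card (inversions (gperm w)) = invw w"
  unfolding gperm_def using AB_disj[of 1 w]
  by (subst inversions_app) (auto simp: card_invS)



definition FF :: "nat \<Rightarrow> bool list \<Rightarrow> nat \<Rightarrow> nat" where
  "FF i w t = card {a \<in> Aset i w. a < t} + card {b \<in> Bset i w. t \<le> b}"

lemma FF_low: "t \<le> i \<Longrightarrow> FF i w t = nZ w"
proof -
  assume t: "t \<le> i"
  have "{a \<in> Aset i w. a < t} = {}" using AB_ge(1)[of _ i w] t by fastforce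
  moreover have "{b \<in> Bset i w. t \<le> b} = Bset i w" using AB_ge(2)[of _ i w] t by fastforce
  ultimately show ?thesis by (simp add: FF_def card_Bset)
qed

lemma FF_True: "i < t \<Longrightarrow> FF i (True#w) t = Suc (FF (Suc i) w t)"
proof -
  assume t: "i < t"
  have ni: "i \<notin> Aset (Suc i) w" using AB_ge by fastforce
  have "{a \<in> Aset i (True#w). a < t} = insert i {a \<in> Aset (Suc i) w. a < t}"
    using t by (auto simp: Aset_Cons)
  then have "card {a \<in> Aset i (True#w). a < t} = Suc (card {a \<in> Aset (Suc i) w. a < t})"
    using ni by simp
  then show ?thesis by (simp add: FF_def Bset_Cons)
qed

lemma FF_False: "i < t \<Longrightarrow> FF i (False#w) t = FF (Suc i) w t"
proof -
  assume t: "i < t"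
  have "{b \<in> Bset i (False#w). t \<le> b} = {b \<in> Bset (Suc i) w. t \<le> b}"
    using t by (auto simp: Bset_Cons)
  then show ?thesis by (simp add: FF_def Aset_Cons)
qed

lemma FF_lis: "(\<forall>t. FF i w t \<le> lisw w) \<and> (\<exists>t. FF i w t = lisw w)"
proof (induction w arbitrary: i)
  case Nil then show ?case by (simp add: FF_def)
next
  case (Cons b w)
  show ?case
  proof (cases b)
    case True
    have le: "FF i (True#w) t \<le> lisw (True#w)" for t
    proof (cases "t \<le> i")
      case True
      then show ?thesis using FF_low[of t i "True#w"] nZ_le[of w] by simp
    next
      case False
      then show ?thesis using FF_True[of i t w] Cons[of "Suc i"] by simp
    qed
    obtain t0 where t0: "FF (Suc i) w t0 = lisw w" using Cons by blast
    define t1 where "t1 = max t0 (Suc i)"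
    have "FF (Suc i) w t1 = FF (Suc i) w t0"
      using FF_low[of t0 "Suc i" w] FF_low[of "Suc i" "Suc i" w] by (cases "t0 \<le> Suc i") (auto simp: t1_def max_def)
    then have "FF i (True#w) t1 = lisw (True#w)" using FF_True[of i t1 w] t0 by (simp add: t1_def)
    then show ?thesis using le True by auto
  next
    case False
    have le: "FF i (False#w) t \<le> lisw (False#w)" for t
    proof (cases "t \<le> i")
      case True
      then show ?thesis using FF_low[of t i "False#w"] by simp
    next
      case False
      have "FF (Suc i) w t \<le> lisw w" using Cons[of "Suc i"] by blast
      then show ?thesis using False FF_False[of i t w] by simp
    qed
    show ?thesis
    proof (cases "lisw w \<le> Suc (nZ w)")
      case True
      then have "FF i (False#w) i = lisw (False#w)" using FF_low[of i i "False#w"] by simp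
      then show ?thesis using le \<open>\<not> b\<close> by auto
    next
      case c: False
      obtain t0 where t0: "FF (Suc i) w t0 = lisw w" using Cons by blast
      have "i < t0"
      proof (rule ccontr)
        assume "\<not> i < t0"
        then have "FF (Suc i) w t0 = nZ w" using FF_low[of t0 "Suc i" w] by simp
        then show False using t0 c by simp
      qed
      then have "FF i (False#w) t0 = lisw (False#w)" using FF_False[of i t0 w] t0 c by simp
      then show ?thesis using le \<open>\<not> b\<close> by auto
    qed
  qed
qed

lemma gperm_avoids: "avoids_id k (gperm w) \<longleftrightarrow> lisw w < k"
proof -
  have "(\<exists>t. k \<le> FF 1 w t) \<longleftrightarrow> k \<le> lisw w"
    using FF_lis[of 1 w] le_trans by metis
  then show ?thesis
    unfolding avoids_id_def gperm_def using lis_app[of "Aset 1 w" "Bset 1 w" k]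
    by (simp add: FF_def not_le)
qed




lemma desc_gperm: assumes "0 < invw w"
  shows "descents (gperm w) = {card (Aset 1 w) - 1} \<and> 1 \<le> card (Aset 1 w)"
proof -
  let ?xs = "sorted_list_of_set (Aset 1 w)" and ?ys = "sorted_list_of_set (Bset 1 w)"
  have "card (invS (Aset 1 w) (Bset 1 w)) > 0" using assms card_invS by simp
  then obtain a b where ab: "a \<in> Aset 1 w" "b \<in> Bset 1 w" "b < a"
    by (auto simp: invS_def dest!: card_gt_0_iff[THEN iffD1])
  have "a \<in> set ?xs" using ab(1) by simp
  then obtain ia where ia: "ia < length ?xs" "?xs!ia = a" using in_set_conv_nth[of a ?xs] by blast
  have "b \<in> set ?ys" using ab(2) by simp
  then obtain ib where ib: "ib < length ?ys" "?ys!ib = b" using in_set_conv_nth[of b ?ys] by blast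
  let ?l = "length ?xs"
  have l1: "1 \<le> ?l" using ia by simp
  have "?xs ! ia \<le> ?xs ! (?l - 1)" using ia by (intro sorted_nth_le) auto
  moreover have "?ys ! 0 \<le> ?ys ! ib" using ib by (intro sorted_nth_le) auto
  ultimately have "gperm w ! (?l - 1) > gperm w ! Suc (?l - 1)"
    using l1 ia ib ab(3) by (simp add: gperm_def nth_append)
  moreover have "Suc (?l - 1) < length (gperm w)" using l1 ib by (simp add: gperm_def)
  ultimately have "?l - 1 \<in> descents (gperm w)" by (simp add: descents_def)
  moreover have "descents (gperm w) \<subseteq> {?l - 1}" unfolding gperm_def by (rule descents_app) auto
  ultimately show ?thesis using l1 by auto
qed

lemma Aset_nth: "j < length w \<Longrightarrow> w!j \<longleftrightarrow> Suc j \<in> Aset 1 w"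
  by (simp add: Aset_def)

lemma gperm_inj: assumes "0 < invw w1" "0 < invw w2" "gperm w1 = gperm w2"
  shows "w1 = w2"
proof -
  have "{card (Aset 1 w1) - 1} = {card (Aset 1 w2) - 1}"
    using desc_gperm[OF assms(1)] desc_gperm[OF assms(2)] assms(3) by simp
  moreover have "1 \<le> card (Aset 1 w1)" "1 \<le> card (Aset 1 w2)"
    using desc_gperm[OF assms(1)] desc_gperm[OF assms(2)] by simp_all
  ultimately have c: "card (Aset 1 w1) = card (Aset 1 w2)" by simp
  have tk: "Aset 1 w = set (take (card (Aset 1 w)) (gperm w))" for w
    by (simp add: gperm_def)
  have A: "Aset 1 w1 = Aset 1 w2" using tk[of w1] tk[of w2] c assms(3) by simp
  have L: "length w1 = length w2" using assms(3) length_gperm[of w1] length_gperm[of w2] by simp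
  show ?thesis
    by (rule nth_equalityI) (use L A Aset_nth in auto)
qed

lemma grass_surj: assumes "is_perm p" "grassmannian p"
  shows "\<exists>w. gperm w = p"
proof -
  let ?m = "length p"
  have dp: "distinct p" and sp: "set p = {1..?m}" using assms(1) by (auto simp: is_perm_def)
  have fd: "finite (descents p)" by (rule finite_subset[of _ "{..<?m}"]) (auto simp: descents_def)
  have cd: "card (descents p) \<le> 1" using assms(2) by (simp add: grassmannian_def)
  obtain j where j: "\<And>i. Suc i < ?m \<Longrightarrow> Suc i \<noteq> j \<Longrightarrow> p!i < p!Suc i"
  proof (cases "descents p = {}")
    case True
    show ?thesis
    proof (rule that[of 0])
      fix i assume "Suc i < ?m"
      moreover have "p!i \<noteq> p!Suc i" using dp \<open>Suc i < ?m\<close> by (simp add: nth_eq_iff_index_eq)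
      ultimately show "p!i < p!Suc i" using True by (auto simp: descents_def)
    qed
  next
    case False
    then obtain d where d: "d \<in> descents p" by blast
    have "card (descents p) \<le> Suc 0" using cd by simp
    then have "\<forall>a\<in>descents p. \<forall>b\<in>descents p. a = b" using card_le_Suc0_iff_eq[OF fd] by blast
    then have one: "\<And>i. i \<in> descents p \<Longrightarrow> i = d" using d by blast
    show ?thesis
    proof (rule that[of "Suc d"])
      fix i assume i: "Suc i < ?m" "Suc i \<noteq> Suc d"
      moreover have "p!i \<noteq> p!Suc i" using dp i by (simp add: nth_eq_iff_index_eq)
      moreover have "i \<notin> descents p" using one i by auto
      ultimately show "p!i < p!Suc i" by (auto simp: descents_def)
    qed
  qed
  define x where "x = take j p"
  define y where "y = drop j p"
  have sx: "sorted_wrt (<) x"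
  proof (subst sorted_wrt_iff_nth_Suc_transp[OF transp_on_less], intro allI impI)
    fix i assume i: "Suc i < length x"
    then have "Suc i < ?m" "Suc i < j" by (simp_all add: x_def)
    then have "p!i < p!Suc i" using j by simp
    then show "x!i < x!Suc i" using i by (simp add: x_def)
  qed
  have sy: "sorted_wrt (<) y"
  proof (subst sorted_wrt_iff_nth_Suc_transp[OF transp_on_less], intro allI impI)
    fix i assume i: "Suc i < length y"
    then have "Suc (j + i) < ?m" by (simp add: y_def)
    then have "p!(j+i) < p!Suc (j+i)" using j by simp
    then show "y!i < y!Suc i" using i by (simp add: y_def)
  qed
  have pxy: "p = x @ y" by (simp add: x_def y_def)
  have dxy: "set x \<inter> set y = {}" using dp pxy by auto
  define w where "w = map (\<lambda>i. Suc i \<in> set x) [0..<?m]"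
  have lw: "length w = ?m" unfolding w_def by simp
  have xsub: "set x \<subseteq> {1..?m}" using sp pxy by auto
  have A: "Aset 1 w = set x"
  proof
    show "Aset 1 w \<subseteq> set x" by (auto simp: Aset_def w_def)
    show "set x \<subseteq> Aset 1 w"
    proof
      fix v assume v: "v \<in> set x"
      then have "1 \<le> v" "v \<le> ?m" using xsub by auto
      then show "v \<in> Aset 1 w" using v by (auto simp: Aset_def w_def)
    qed
  qed
  have B: "Bset 1 w = set y"
  proof -
    have "Bset 1 w = {1..<1 + ?m} - Aset 1 w" using AB_un[of 1 w] AB_disj[of 1 w] lw by auto
    also have "\<dots> = set p - set x" using sp A by auto
    also have "\<dots> = set y" using pxy dxy by auto
    finally show ?thesis .
  qed
  have "sorted_list_of_set (set x) = x"
    using sorted_list_of_set_unique[of "set x" x] sx by (simp add: strict_sorted_iff distinct_card)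
  moreover have "sorted_list_of_set (set y) = y"
    using sorted_list_of_set_unique[of "set y" y] sy by (simp add: strict_sorted_iff distinct_card)
  ultimately have "gperm w = p" using A B pxy by (simp add: gperm_def)
  then show ?thesis by blast
qed



theorem corollary4p6:
  fixes k :: nat
  assumes "k \<ge> 1"
  defines "S \<equiv> {p. is_perm p \<and> grassmannian p \<and> odd_perm p \<and> avoids_id k p}"
  shows "finite S \<and>
    of_nat (card S) =
      (if odd k
       then catalan (k + 1) / 2 - 2 * catalan ((k + 1) div 2) + 1
       else (catalan (k + 1) - catalan (k div 2)) / 2 - catalan ((k + 2) div 2) + 1)"
proof -
  define n where "n = k - 1"
  have kn: "k = Suc n" using assms(1) by (simp add: n_def)
  have SE: "S = gperm ` OW n"
  proof
    show "S \<subseteq> gperm ` OW n"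
    proof
      fix p assume "p \<in> S"
      then have p: "is_perm p" "grassmannian p" "odd_perm p" "avoids_id k p" by (auto simp: S_def)
      obtain w where w: "gperm w = p" using grass_surj[OF p(1,2)] by blast
      have "odd (invw w)" using p(3) w gperm_inv by (auto simp: odd_perm_def)
      moreover have "lisw w \<le> n" using p(4) w gperm_avoids[of k w] kn by simp
      ultimately show "p \<in> gperm ` OW n" using w by (auto simp: OW_def)
    qed
    show "gperm ` OW n \<subseteq> S"
      using gperm_perm gperm_grass gperm_inv gperm_avoids kn
      by (auto simp: S_def OW_def odd_perm_def)
  qed
  have inj: "inj_on gperm (OW n)"
    by (rule inj_onI) (auto simp: OW_def intro: gperm_inj odd_pos)
  have fin: "finite S" using SE card_OW[of n] by simp
  have cS: "card S = card (OW n)" using SE inj by (simp add: card_image)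
  have eq: "2 * int (card S) = (tt (Suc (Suc n)) (Suc (Suc n)) - 1) - (\<Sum>Z\<le>n. cR Z n)"
    using card_OW[of n] sum_gg[of n] cS by simp
  show ?thesis
  proof (cases "odd k")
    case True
    then obtain l where l: "n = 2*l" using kn by (metis evenE odd_Suc_div_two dvd_mult_div_cancel even_Suc)
    have "(k+1) div 2 = Suc l" using kn l by simp
    have e2: "2 * int (card S) = tt (Suc (Suc n)) (Suc (Suc n)) - 1 - (4 * tt (Suc l) (Suc l) - 3)"
      using eq totS_even[of l] l by simp
    have "(of_nat (card S) :: rat) = of_int (tt (Suc (Suc n)) (Suc (Suc n)) - 1 - (4 * tt (Suc l) (Suc l) - 3)) / 2"
      using arg_cong[OF e2, of "of_int :: int \<Rightarrow> rat"] by simp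
    then show ?thesis using fin \<open>(k+1) div 2 = Suc l\<close> kn True
      by (simp add: catalan_tt)
  next
    case False
    then obtain l where l: "n = Suc (2*l)" using kn by (metis oddE even_Suc Suc_eq_plus1)
    have kk: "k div 2 = Suc l" "(k+2) div 2 = Suc (Suc l)" using kn l by simp_all
    have e2: "2 * int (card S) = tt (Suc (Suc n)) (Suc (Suc n)) - 1 - (tt (Suc l) (Suc l) + 2 * tt (Suc (Suc l)) (Suc (Suc l)) - 3)"
      using eq totS_odd[of l] l by simp
    have "(of_nat (card S) :: rat) = of_int (tt (Suc (Suc n)) (Suc (Suc n)) - 1 - (tt (Suc l) (Suc l) + 2 * tt (Suc (Suc l)) (Suc (Suc l)) - 3)) / 2"
      using arg_cong[OF e2, of "of_int :: int \<Rightarrow> rat"] by simp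
    then show ?thesis using fin kk kn False
      by (simp add: catalan_tt) (simp add: field_simps)
  qed
qed


end
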